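(* Let $k,m,n$ be positive integers with $m\le n(n+1)/2$. Let $\mathcal{C}$ be any algorithm that, given an $m\times n$ matrix $A$ whose entries are $O(k)$-bit integers, produces a data structure (bit string) $\mathcal{C}(A)$ from which, independently of $A$, the value $\mu_A(J)$ can be evaluated for every $J\in\mathbb{I}_n$. Then $\mathcal{C}(A)$ needs $\Omega(km)$ bits of space (i.e. in the worst case over such matrices $A$, $\mathcal{C}(A)$ has at least $c\,km$ bits for an absolute constant $c>0$).
   Context: For integers $i\le j$, $[i:j]=\{i,\dots,j\}$; $\mathbb{I}_n=\{[i:j]:1\le i\le j\le n\}$. For a matrix $A=[a_{ij}]$ with $n$ columns, $\mu_A:\mathbb{I}_n\to\mathbb{R}$ is $\mu_A(J)=\max_{k'\ge1}\sum_{i=1}^{k'}\sum_{j\in J}a_{ij}$, the maximum over row indices $k'$. *)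

theory Defs
  imports Complex_Main
begin

text \<open>An m x n integer matrix is represented as a function on indices (rows 1..m,
  columns 1..n); entries outside this range are required to be 0 so that
  distinct functions correspond to distinct matrices.\<close>

definition int_matrix_bits :: "nat \<Rightarrow> nat \<Rightarrow> nat \<Rightarrow> (nat \<Rightarrow> nat \<Rightarrow> int) set" where
  "int_matrix_bits b m n = {A. (\<forall>i j. (i < 1 \<or> i > m \<or> j < 1 \<or> j > n) \<longrightarrow> A i j = 0)
                             \<and> (\<forall>i j. \<bar>A i j\<bar> < 2 ^ b)}"

definition mu :: "nat \<Rightarrow> (nat \<Rightarrow> nat \<Rightarrow> int) \<Rightarrow> nat \<Rightarrow> nat \<Rightarrow> int" where
  "mu m A i j = Max ((\<lambda>k'. \<Sum>r = 1..k'. \<Sum>c = i..j. A r c) ` {1..m})"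

end

theory Submission
  imports Defs "HOL-Library.FuncSet"
begin

lemma bool_lists_lt_card:
  "finite {xs::bool list. length xs < N} \<and> card {xs::bool list. length xs < N} < 2 ^ N"
proof (induction N)
  case 0
  then show ?case by simp
next
  case (Suc N)
  have e: "{xs::bool list. length xs < Suc N} = {xs. length xs < N} \<union> {xs. set xs \<subseteq> UNIV \<and> length xs = N}"
    by auto
  have f2: "finite {xs::bool list. set xs \<subseteq> UNIV \<and> length xs = N}"
    by (rule finite_lists_length_eq) simp
  have c2: "card {xs::bool list. set xs \<subseteq> UNIV \<and> length xs = N} = 2 ^ N"
    using card_lists_length_eq[of "UNIV::bool set" N] by simp
  have "card {xs::bool list. length xs < Suc N} \<le> card {xs::bool list. length xs < N} + 2 ^ N"
    unfolding e using card_Un_le[of "{xs::bool list. length xs < N}" "{xs. set xs \<subseteq> UNIV \<and> length xs = N}"] c2 by linarith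
  then show ?case using Suc e f2 by simp
qed

lemma long_list_exists:
  assumes "finite S" "card (S :: bool list set) \<ge> 2 ^ N"
  shows "\<exists>s\<in>S. length s \<ge> N"
proof (rule ccontr)
  assume "\<not> ?thesis"
  then have "S \<subseteq> {xs. length xs < N}" by auto
  then have "card S \<le> card {xs::bool list. length xs < N}"
    using bool_lists_lt_card[of N] card_mono by blast
  then show False using bool_lists_lt_card[of N] assms by simp
qed

definition Ivs :: "nat \<Rightarrow> (nat \<times> nat) set" where
  "Ivs n = {(a, b). 1 \<le> a \<and> a \<le> b \<and> b \<le> n}"

lemma Ivs_card: "finite (Ivs n) \<and> 2 * card (Ivs n) = n * (n + 1)"
proof (induction n)
  case 0
  have "Ivs 0 = {}" by (auto simp: Ivs_def)
  then show ?case by simp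
next
  case (Suc n)
  have e: "Ivs (Suc n) = Ivs n \<union> (\<lambda>a. (a, Suc n)) ` {1..Suc n}"
    by (auto simp: Ivs_def)
  have d: "Ivs n \<inter> (\<lambda>a. (a, Suc n)) ` {1..Suc n} = {}" by (auto simp: Ivs_def)
  have ci: "card ((\<lambda>a. (a, Suc n)) ` {1..Suc n}) = Suc n"
    by (subst card_image) (auto simp: inj_on_def)
  have "card (Ivs (Suc n)) = card (Ivs n) + Suc n"
    unfolding e using Suc d ci by (simp add: card_Un_disjoint)
  then show ?case using Suc e by simp
qed

lemma Ivs_mem: "x \<in> Ivs n \<Longrightarrow> 1 \<le> fst x \<and> fst x \<le> snd x \<and> snd x \<le> n"
  by (cases x) (auto simp: Ivs_def)

lemma tele_c:
  fixes g :: "nat \<Rightarrow> int"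
  shows "1 \<le> i \<Longrightarrow> i \<le> j \<Longrightarrow> (\<Sum>c=i..j. g c - g (c-1)) = g j - g (i-1)"
proof (induction j)
  case 0
  then show ?case by simp
next
  case (Suc j)
  show ?case
  proof (cases "i = Suc j")
    case True
    then show ?thesis by simp
  next
    case False
    then have "i \<le> j" using Suc by simp
    then show ?thesis using Suc by (simp add: sum.cl_ivl_Suc)
  qed
qed

lemma tele_r:
  fixes h :: "nat \<Rightarrow> int"
  shows "(\<Sum>r=1..K. h r - h (r-1)) = h K - h 0"
  by (induction K) (auto simp: sum.cl_ivl_Suc)

definition Fv :: "nat \<Rightarrow> (nat \<Rightarrow> nat \<times> nat) \<Rightarrow> (nat \<Rightarrow> nat) \<Rightarrow> nat \<Rightarrow> nat \<Rightarrow> int" where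
  "Fv k p f r w = (if r = 0 then 0 else if w = fst (p r) - 1 then - (2 ^ k + 2)
     else if w = snd (p r) then int (f r) else -1)"

definition Am :: "nat \<Rightarrow> nat \<Rightarrow> nat \<Rightarrow> (nat \<Rightarrow> nat \<times> nat) \<Rightarrow> (nat \<Rightarrow> nat) \<Rightarrow> nat \<Rightarrow> nat \<Rightarrow> int" where
  "Am k m n p f r c = (if 1 \<le> r \<and> r \<le> m \<and> 1 \<le> c \<and> c \<le> n then
      Fv k p f r c - Fv k p f r (c-1) - Fv k p f (r-1) c + Fv k p f (r-1) (c-1) else 0)"

lemma sumA:
  assumes "1 \<le> K" "K \<le> m" "1 \<le> i" "i \<le> j" "j \<le> n"
  shows "(\<Sum>r=1..K. \<Sum>c=i..j. Am k m n p f r c) = Fv k p f K j - Fv k p f K (i-1)"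
proof -
  let ?H = "\<lambda>r. Fv k p f r j - Fv k p f r (i-1)"
  have "(\<Sum>c=i..j. Am k m n p f r c) = ?H r - ?H (r-1)" if r: "r \<in> {1..K}" for r
  proof -
    have "(\<Sum>c=i..j. Am k m n p f r c) = (\<Sum>c=i..j. (Fv k p f r c - Fv k p f r (c-1)) - (Fv k p f (r-1) c - Fv k p f (r-1) (c-1)))"
      using r assms by (intro sum.cong) (auto simp: Am_def)
    also have "\<dots> = (\<Sum>c=i..j. Fv k p f r c - Fv k p f r (c-1)) - (\<Sum>c=i..j. Fv k p f (r-1) c - Fv k p f (r-1) (c-1))"
      by (simp add: sum_subtractf)
    also have "\<dots> = ?H r - ?H (r-1)"
      using tele_c[of i j "Fv k p f r"] tele_c[of i j "Fv k p f (r-1)"] assms by simp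
    finally show ?thesis .
  qed
  then have "(\<Sum>r=1..K. \<Sum>c=i..j. Am k m n p f r c) = (\<Sum>r=1..K. ?H r - ?H (r-1))"
    by (rule sum.cong[OF refl])
  also have "\<dots> = ?H K - ?H 0" by (rule tele_r)
  finally show ?thesis by (simp add: Fv_def)
qed

lemma Fv_bound:
  assumes "f r < 2 ^ k"
  shows "\<bar>Fv k p f r w\<bar> \<le> 2 ^ k + 2"
proof -
  have "int (f r) < 2 ^ k" using assms by (metis of_nat_less_iff of_nat_numeral of_nat_power)
  moreover have "(0::int) < 2 ^ k" by simp
  ultimately show ?thesis unfolding Fv_def by (simp split: if_split; linarith)
qed

lemma aux_le:
  fixes x M :: int and p' q u b :: nat
  assumes "p' < q" "u < b" "\<not> (p' = u \<and> q = b)" "0 \<le> x" "x < M"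
  shows "(if q = u then - (M + 2) else if q = b then x else -1)
       - (if p' = u then - (M + 2) else if p' = b then x else -1) \<le> M + 1"
  using assms by (cases "q = u"; cases "q = b"; cases "p' = u"; cases "p' = b"; simp)

lemma other_le:
  assumes "1 \<le> fst (p K)" "fst (p K) \<le> snd (p K)" "1 \<le> i" "i \<le> j" "p K \<noteq> (i, j)"
    "f K < 2 ^ k" "K \<noteq> 0"
  shows "Fv k p f K j - Fv k p f K (i-1) \<le> 2 ^ k + 1"
proof -
  have x: "int (f K) < 2 ^ k" using assms by (metis of_nat_less_iff of_nat_numeral of_nat_power)
  obtain a b where ab: "p K = (a, b)" by force
  have ne: "\<not> (i - 1 = a - 1 \<and> j = b)" using assms ab by auto
  have lt: "i - 1 < j" "a - 1 < b" using assms ab by auto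
  have "Fv k p f K j - Fv k p f K (i-1) =
      (if j = a - 1 then - (2 ^ k + 2) else if j = b then int (f K) else -1)
       - (if i - 1 = a - 1 then - (2 ^ k + 2) else if i - 1 = b then int (f K) else -1)"
    using assms(7) ab by (simp add: Fv_def)
  also have "\<dots> \<le> 2 ^ k + 1"
    by (rule aux_le[OF lt ne]) (use x in auto)
  finally show ?thesis .
qed

lemma mu_peak:
  assumes inj: "inj_on p {1..m}" and pI: "p ` {1..m} \<subseteq> Ivs n"
    and fb: "\<forall>r\<in>{1..m}. f r < 2 ^ k" and r0: "r0 \<in> {1..m}"
  shows "mu m (Am k m n p f) (fst (p r0)) (snd (p r0)) = 2 ^ k + 2 + int (f r0)"
proof -
  obtain i j where ij: "p r0 = (i, j)" by force
  have "p r0 \<in> Ivs n" using pI r0 by blast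
  then have ijb: "1 \<le> i" "i \<le> j" "j \<le> n" using ij Ivs_mem[of "p r0" n] by auto
  have "mu m (Am k m n p f) i j = Max ((\<lambda>K. Fv k p f K j - Fv k p f K (i-1)) ` {1..m})"
    unfolding mu_def using sumA[of _ m i j n k p f] ijb
    by (intro arg_cong[where f=Max] image_cong) auto
  also have "\<dots> = 2 ^ k + 2 + int (f r0)"
  proof (rule Max_eqI)
    show "finite ((\<lambda>K. Fv k p f K j - Fv k p f K (i-1)) ` {1..m})" by simp
    have "Fv k p f r0 j - Fv k p f r0 (i-1) = 2 ^ k + 2 + int (f r0)"
      using ij ijb r0 unfolding Fv_def by auto
    then show "2 ^ k + 2 + int (f r0) \<in> (\<lambda>K. Fv k p f K j - Fv k p f K (i-1)) ` {1..m}"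
      using r0 by force
    fix y assume "y \<in> (\<lambda>K. Fv k p f K j - Fv k p f K (i-1)) ` {1..m}"
    then obtain K where K: "K \<in> {1..m}" "y = Fv k p f K j - Fv k p f K (i-1)" by auto
    show "y \<le> 2 ^ k + 2 + int (f r0)"
    proof (cases "K = r0")
      case True
      then show ?thesis using K \<open>Fv k p f r0 j - Fv k p f r0 (i-1) = 2 ^ k + 2 + int (f r0)\<close> by simp
    next
      case False
      then have "p K \<noteq> (i, j)" using inj K r0 ij by (metis inj_onD)
      moreover have "p K \<in> Ivs n" using pI K by blast
      then have "1 \<le> fst (p K)" "fst (p K) \<le> snd (p K)" using Ivs_mem[of "p K" n] by auto
      ultimately have "y \<le> 2 ^ k + 1" using other_le[of p K i j f k] K fb ijb by auto
      then show ?thesis by simp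
    qed
  qed
  finally show ?thesis using ij by simp
qed

lemma abs4:
  fixes a b c d M :: int
  shows "\<bar>a\<bar> \<le> M \<Longrightarrow> \<bar>b\<bar> \<le> M \<Longrightarrow> \<bar>c\<bar> \<le> M \<Longrightarrow> \<bar>d\<bar> \<le> M \<Longrightarrow> \<bar>a - b - c + d\<bar> \<le> 4 * M"
  by (simp add: abs_le_iff)

lemma lin_aux: "\<bar>a\<bar> \<le> 4 * (X + 2) \<Longrightarrow> 16 * X \<le> Y \<Longrightarrow> 2 \<le> X \<Longrightarrow> \<bar>a\<bar> < (Y::int)"
  by arith

lemma Am_in:
  assumes "k \<ge> 1" "\<forall>r\<in>{1..m}. f r < 2 ^ k"
  shows "Am k m n p f \<in> int_matrix_bits (5 * k) m n"
proof -
  have b: "\<bar>Am k m n p f r c\<bar> < 2 ^ (5 * k)" for r c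
  proof (cases "1 \<le> r \<and> r \<le> m \<and> 1 \<le> c \<and> c \<le> n")
    case True
    have f1: "f r < 2 ^ k" using True assms by auto
    have f0: "\<bar>Fv k p f (r-1) w\<bar> \<le> 2 ^ k + 2" for w
    proof (cases "r - 1 = 0")
      case True then show ?thesis by (simp add: Fv_def)
    next
      case False
      then have "r - 1 \<in> {1..m}" using \<open>1 \<le> r \<and> r \<le> m \<and> 1 \<le> c \<and> c \<le> n\<close> by auto
      then have "f (r - 1) < 2 ^ k" using assms(2) by blast
      then show ?thesis by (rule Fv_bound)
    qed
    have "\<bar>Am k m n p f r c\<bar> \<le> 4 * (2 ^ k + 2)"
      using True abs4[OF Fv_bound[of f r k p c] Fv_bound[of f r k p "c-1"] f0[of c] f0[of "c-1"]] f1
      unfolding Am_def by simp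
    moreover have "(2::int) ^ (k + 4) \<le> 2 ^ (5 * k)" using assms by (intro power_increasing) auto
    moreover have "(2::int) ^ k \<ge> 2" using assms
      by (metis power_increasing power_one_right one_le_numeral)
    moreover have "(2::int) ^ (k + 4) = 16 * 2 ^ k" by (simp add: power_add)
    ultimately show ?thesis by (metis lin_aux)
  next
    case False
    have "Am k m n p f r c = 0" unfolding Am_def by (rule if_not_P[OF False])
    then show ?thesis by simp
  qed
  have z: "(i < 1 \<or> i > m \<or> j < 1 \<or> j > n) \<Longrightarrow> Am k m n p f i j = 0" for i j
    by (auto simp: Am_def)
  show ?thesis unfolding int_matrix_bits_def using b z by blast
qed

theorem lemma6p6:
  shows "\<exists>c::real. c > 0 \<and> (\<exists>C::nat. \<forall>k m n :: nat.
           \<forall>(enc :: (nat \<Rightarrow> nat \<Rightarrow> int) \<Rightarrow> bool list) (dec :: bool list \<Rightarrow> nat \<Rightarrow> nat \<Rightarrow> int).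
             k \<ge> 1 \<longrightarrow> m \<ge> 1 \<longrightarrow> n \<ge> 1 \<longrightarrow> 2 * m \<le> n * (n + 1) \<longrightarrow>
             (\<forall>A \<in> int_matrix_bits (C * k) m n. \<forall>i j. 1 \<le> i \<longrightarrow> i \<le> j \<longrightarrow> j \<le> n \<longrightarrow>
                 dec (enc A) i j = mu m A i j) \<longrightarrow>
             (\<exists>A \<in> int_matrix_bits (C * k) m n. real (length (enc A)) \<ge> c * real k * real m))"
proof (intro exI conjI allI impI)
  show "(1::real) > 0" by simp
  fix k m n :: nat and enc :: "(nat \<Rightarrow> nat \<Rightarrow> int) \<Rightarrow> bool list" and dec :: "bool list \<Rightarrow> nat \<Rightarrow> nat \<Rightarrow> int"
  assume k: "k \<ge> 1" and m: "m \<ge> 1" and n: "n \<ge> 1" and mn: "2 * m \<le> n * (n + 1)"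
    and D: "\<forall>A \<in> int_matrix_bits (5 * k) m n. \<forall>i j. 1 \<le> i \<longrightarrow> i \<le> j \<longrightarrow> j \<le> n \<longrightarrow>
                 dec (enc A) i j = mu m A i j"
  have "card {1..m} \<le> card (Ivs n)" using Ivs_card[of n] mn by simp
  then obtain p where pI: "p ` {1..m} \<subseteq> Ivs n" and inj: "inj_on p {1..m}"
    using card_le_inj[of "{1..m}" "Ivs n"] Ivs_card[of n] by auto
  define P where "P = PiE {1..m} (\<lambda>_. {0..<(2::nat) ^ k})"
  define g where "g f = enc (Am k m n p f)" for f
  have fbP: "\<forall>r\<in>{1..m}. f r < 2 ^ k" if "f \<in> P" for f using that by (auto simp: P_def)
  have inP: "Am k m n p f \<in> int_matrix_bits (5 * k) m n" if "f \<in> P" for f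
    using Am_in[OF k fbP[OF that]] .
  have injg: "inj_on g P"
  proof (rule inj_onI)
    fix f f' assume f: "f \<in> P" and f': "f' \<in> P" and e: "g f = g f'"
    show "f = f'" unfolding P_def
    proof (rule PiE_ext)
      show "f \<in> PiE {1..m} (\<lambda>_. {0..<(2::nat) ^ k})" using f by (simp add: P_def)
      show "f' \<in> PiE {1..m} (\<lambda>_. {0..<(2::nat) ^ k})" using f' by (simp add: P_def)
      fix r assume r: "r \<in> {1..m}"
      have "p r \<in> Ivs n" using pI r by blast
      then have ib: "1 \<le> fst (p r)" "fst (p r) \<le> snd (p r)" "snd (p r) \<le> n" using Ivs_mem[of "p r" n] by auto
      have "dec (g f) (fst (p r)) (snd (p r)) = 2 ^ k + 2 + int (f r)"
        using D inP[OF f] ib mu_peak[OF inj pI fbP[OF f] r] unfolding g_def by auto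
      moreover have "dec (g f') (fst (p r)) (snd (p r)) = 2 ^ k + 2 + int (f' r)"
        using D inP[OF f'] ib mu_peak[OF inj pI fbP[OF f'] r] unfolding g_def by auto
      ultimately show "f r = f' r" using e by simp
    qed
  qed
  have cP: "card P = 2 ^ (k * m)" unfolding P_def by (simp add: card_PiE power_mult)
  have "finite P" unfolding P_def by (simp add: finite_PiE)
  then have "finite (g ` P)" "card (g ` P) \<ge> 2 ^ (k * m)" using card_image[OF injg] cP by auto
  then obtain s where s: "s \<in> g ` P" "length s \<ge> k * m" using long_list_exists by blast
  then obtain f where f: "f \<in> P" "s = enc (Am k m n p f)" by (auto simp: g_def)
  show "\<exists>A \<in> int_matrix_bits (5 * k) m n. real (length (enc A)) \<ge> 1 * real k * real m"
  proof (intro bexI)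
    show "Am k m n p f \<in> int_matrix_bits (5 * k) m n" using inP[OF f(1)] .
    have "real (k * m) \<le> real (length s)" using s(2) by linarith
    then show "1 * real k * real m \<le> real (length (enc (Am k m n p f)))" using f by simp
  qed
qed

end
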